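(* Let $f:[0,1]\to\mathbb{R}$ with $f(0),f(1)\in\mathbb{Z}$, and let $n\in\mathbb{N}_+$, $n\ge 3$. Set \[ \psi_n(x):=(n+1)\int_0^1 t(1-t)^{n(1-x)+1}\frac{(1-t)^{nx-1}-t^{nx-1}}{1-2t}\,dt,\quad x\in[0,1]. \] If $f(x)+\psi_n(x)$ is monotone decreasing on $[0,1]$, then $\widetilde{B}_n(f)$ is monotone decreasing on $[0,1]$.
   Context: For $n\in\mathbb{N}_+$ and $f:[0,1]\to\mathbb{R}$, $\widetilde{B}_n(f)(x):=\sum_{k=0}^n \left[f\left(\frac{k}{n}\right)\binom{n}{k}\right]x^k(1-x)^{n-k}$, where $[\alpha]$ is the largest integer $\le\alpha$. Monotone decreasing is meant in the non-strict sense. *)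

theory Defs
  imports "HOL-Analysis.Analysis"
begin

definition Btilde :: "nat \<Rightarrow> (real \<Rightarrow> real) \<Rightarrow> real \<Rightarrow> real" where
  "Btilde n f x = (\<Sum>k=0..n. real_of_int \<lfloor>f (real k / real n) * real (n choose k)\<rfloor>
                      * x ^ k * (1 - x) ^ (n - k))"

definition psi :: "nat \<Rightarrow> real \<Rightarrow> real" where
  "psi n x = (real n + 1) * integral {0..1} (\<lambda>t. t * (1 - t) powr (real n * (1 - x) + 1)
       * (((1 - t) powr (real n * x - 1) - t powr (real n * x - 1)) / (1 - 2 * t)))"

end

theory Submission
  imports Defs
begin


definition G :: "nat \<Rightarrow> real \<Rightarrow> real \<Rightarrow> real" where
  "G n x t = t * (1 - t) powr (real n * (1 - x) + 1)
       * (((1 - t) powr (real n * x - 1) - t powr (real n * x - 1)) / (1 - 2 * t))"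

lemma psi_G: "psi n x = (real n + 1) * integral {0..1} (G n x)"
proof -
  have "G n x = (\<lambda>t. t * (1 - t) powr (real n * (1 - x) + 1)
       * (((1 - t) powr (real n * x - 1) - t powr (real n * x - 1)) / (1 - 2 * t)))"
    by (rule ext) (simp add: G_def)
  then show ?thesis by (simp add: psi_def)
qed

lemma G_step:
  assumes "n > 0" "0 < t" "t < 1" "t \<noteq> 1/2"
  shows "G n (x + 1/n) t = G n x t + t powr (real n * x) * (1-t) powr (real n * (1-x))"
proof -
  have e1: "real n * (x + 1/n) - 1 = real n * x" using assms by (simp add: field_simps)
  have e2: "real n * (1 - (x + 1/n)) + 1 = real n * (1 - x)" using assms by (simp add: field_simps)
  have e3: "real n * (x + 1/n) = real n * x + 1" using assms by (simp add: field_simps)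
  have t1: "1 - t > 0" using assms by simp
  have p1: "(1-t) powr (real n * (1-x) + 1) = (1-t) powr (real n * (1-x)) * (1-t)"
    using t1 by (simp add: powr_add)
  have p2: "(1-t) powr (real n * x) = (1-t) powr (real n * x - 1) * (1-t)"
    using t1 powr_add[of "1-t" "real n * x - 1" 1] by simp
  have p3: "t powr (real n * x) = t powr (real n * x - 1) * t"
    using assms powr_add[of "t" "real n * x - 1" 1] by simp
  have d: "1 - 2 * t \<noteq> 0" using assms by auto
  show ?thesis
    unfolding G_def e1 e2 p1 p2 p3
    using d by (simp add: field_simps)
qed

lemma G_zero:
  assumes "0 < t" "t < 1"  "t \<noteq> 1/2"
  shows "G n 0 t = - (t powr (real 1 - 1) * (1-t) powr (real (n+1) - 1))"
proof -
  have t1: "1 - t > 0" using assms by simp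
  have p1: "(1-t) powr (real n + 1) = (1-t) powr (real n) * (1-t)"
    using t1 by (simp add: powr_add)
  have d: "1 - 2 * t \<noteq> 0" using assms by auto
  have "G n 0 t = t * (1 - t) powr (real n + 1) * ((inverse (1-t) - inverse t) / (1 - 2*t))"
    unfolding G_def using assms t1 by (simp add: powr_minus)
  also have "\<dots> = (1-t) powr real n * ((t * (1-t) * (inverse (1-t) - inverse t)) / (1 - 2*t))"
    unfolding p1 by (simp only: times_divide_eq_right mult_ac)
  also have "t * (1-t) * (inverse (1-t) - inverse t) = - (1 - 2*t)"
    using assms t1 by (simp add: field_simps)
  also have "- (1 - 2*t) / (1 - 2*t) = -1" by (simp only: divide_minus_left divide_self[OF d])
  also have "(1-t) powr real n * (-1) = - ((1-t) powr real n)" by simp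
  finally show ?thesis using assms by simp
qed

lemma Beta_nat: "Beta (real (a+1)) (real (b+1)) = fact a * fact b / fact (a+b+1)"
proof -
  have "Gamma (real (a+1)) = fact a" using Gamma_fact[of a, where 'a=real] by (simp add: add.commute)
  moreover have "Gamma (real (b+1)) = fact b" using Gamma_fact[of b, where 'a=real] by (simp add: add.commute)
  moreover have "Gamma (real (a+1) + real (b+1)) = fact (a+b+1)"
    using Gamma_fact[of "a+b+1", where 'a=real] by (simp add: add.commute add.left_commute)
  ultimately show ?thesis by (simp add: Beta_def)
qed

lemma negl: "negligible {0, 1, 1/2::real}" by simp

lemma G_int:
  assumes "k \<le> n" "n > 0"
  shows "(G n (real k / n) has_integral (-1/(real n+1) + (\<Sum>i<k. Beta (real (i+1)) (real (n-i+1))))) {0..1}"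
  using assms(1)
proof (induction k)
  case 0
  have "((\<lambda>t. t powr (real 1 - 1) * (1-t) powr (real (n+1) - 1)) has_integral Beta (real 1) (real (n+1))) {0..1}"
    by (rule has_integral_Beta_real) auto
  moreover have "Beta (real 1) (real (n+1)) = 1 / (real n + 1)"
  proof -
    have f: "(fact n::real) > 0" by simp
    have "Beta (real 1) (real (n+1)) = fact n / (fact n * (real n + 1))"
      using Beta_nat[of 0 n] by (simp add: fact_Suc algebra_simps)
    also have "\<dots> = 1 / (real n + 1)" using f by simp
    finally show ?thesis .
  qed
  ultimately have h0: "((\<lambda>t. - (t powr (real 1 - 1) * (1-t) powr (real (n+1) - 1))) has_integral - (1 / (real n + 1))) {0..1}"
    using has_integral_neg by metis
  have "(G n 0 has_integral - (1 / (real n + 1))) {0..1}"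
    by (rule has_integral_spike[OF negl _ h0]) (auto simp: G_zero)
  then show ?case by simp
next
  case (Suc k)
  have "((\<lambda>t. t powr (real (k+1) - 1) * (1-t) powr (real (n-k+1) - 1)) has_integral Beta (real (k+1)) (real (n-k+1))) {0..1}"
    by (rule has_integral_Beta_real) auto
  from has_integral_add[OF Suc.IH[OF Suc_leD[OF Suc.prems]] this]
  have hS: "((\<lambda>t. G n (real k / n) t + t powr (real (k+1) - 1) * (1-t) powr (real (n-k+1) - 1)) has_integral
     (-1/(real n+1) + (\<Sum>i<Suc k. Beta (real (i+1)) (real (n-i+1))))) {0..1}"
    by (simp add: algebra_simps)
  show ?case
  proof (rule has_integral_spike[OF negl _ hS])
    fix t assume t: "t \<in> {0..1::real} - {0, 1, 1/2}"
    have e: "real (Suc k) / n = real k / n + 1 / n" by (simp add: add_divide_distrib)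
    have e2: "real n * (real k / n) = real (k+1) - 1" using assms by simp
    have e3: "real n * (1 - real k / n) = real (n-k+1) - 1" using assms Suc.prems by (simp add: field_simps of_nat_diff)
    show "G n (real (Suc k) / real n) t = G n (real k / real n) t + t powr (real (k+1) - 1) * (1-t) powr (real (n-k+1) - 1)"
      unfolding e using G_step[OF assms(2), of t "real k / n"] t e2 e3 by auto
  qed
qed



lemma bern_deriv0:
  "((\<lambda>x. \<Sum>k=0..n. c k * x^k*(1-x)^(n-k)) has_real_derivative
     (\<Sum>k=0..n. c k * (real k * x^(k-1)*(1-x)^(n-k) - real (n-k) * x^k * (1-x)^(n-k-1)))) (at x)"
  apply (rule derivative_eq_intros refl)+
  apply (rule sum.cong, simp)
  apply (simp add: algebra_simps)
  done

lemma bern_deriv_eq: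
  fixes b :: "nat \<Rightarrow> real"
  shows "(\<Sum>k=0..Suc m. b k * real (Suc m choose k) * (real k * x^(k-1)*(1-x)^(Suc m-k) - real (Suc m-k) * x^k * (1-x)^(Suc m-k-1)))
     = real (Suc m) * (\<Sum>k\<le>m. (b (Suc k) - b k) * real (m choose k) * x^k*(1-x)^(m-k))"
proof -
  define A where "A k = b k * real (Suc m choose k) * real k * x^(k-1)*(1-x)^(Suc m-k)" for k
  define B where "B k = b k * real (Suc m choose k) * real (Suc m-k) * x^k * (1-x)^(Suc m-k-1)" for k
  have "(\<Sum>k=0..Suc m. b k * real (Suc m choose k) * (real k * x^(k-1)*(1-x)^(Suc m-k) - real (Suc m-k) * x^k * (1-x)^(Suc m-k-1)))
     = (\<Sum>k=0..Suc m. A k) - (\<Sum>k=0..Suc m. B k)"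
    unfolding A_def B_def sum_subtractf[symmetric] by (rule sum.cong) (auto simp: algebra_simps)
  also have "(\<Sum>k=0..Suc m. A k) = (\<Sum>k\<le>m. A (Suc k))"
    by (subst sum.atLeast0_atMost_Suc_shift) (simp add: A_def atLeast0AtMost)
  also have "\<dots> = (\<Sum>k\<le>m. real (Suc m) * (b (Suc k) * real (m choose k) * x^k*(1-x)^(m-k)))"
  proof (rule sum.cong[OF refl])
    fix k assume "k \<in> {..m}"
    have "real (Suc m choose Suc k) * real (Suc k) = real (Suc m) * real (m choose k)"
      using Suc_times_binomial_eq[of m k] by (metis of_nat_mult)
    moreover have "A (Suc k) = b (Suc k) * (real (Suc m choose Suc k) * real (Suc k)) * (x^k*(1-x)^(m-k))"
      unfolding A_def by (simp only: mult_ac diff_Suc_Suc diff_Suc_1)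
    ultimately show "A (Suc k) = real (Suc m) * (b (Suc k) * real (m choose k) * x^k*(1-x)^(m-k))"
      by (simp only: mult_ac)
  qed
  also have "(\<Sum>k=0..Suc m. B k) = (\<Sum>k\<le>m. B k)"
    by (simp add: B_def atLeast0AtMost)
  also have "\<dots> = (\<Sum>k\<le>m. real (Suc m) * (b k * real (m choose k) * x^k*(1-x)^(m-k)))"
  proof (rule sum.cong[OF refl])
    fix k assume k: "k \<in> {..m}"
    have "real (Suc m - k) * real (Suc m choose k) = real (Suc m) * real (m choose k)"
      using binomial_absorb_comp[of "Suc m" k] by (metis diff_Suc_1 of_nat_mult)
    moreover have "Suc m - k - 1 = m - k" by simp
    ultimately show "B k = real (Suc m) * (b k * real (m choose k) * x^k*(1-x)^(m-k))"
      unfolding B_def by (simp only: mult_ac)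
  qed
  also have "(\<Sum>k\<le>m. real (Suc m) * (b (Suc k) * real (m choose k) * x^k*(1-x)^(m-k)))
      - (\<Sum>k\<le>m. real (Suc m) * (b k * real (m choose k) * x^k*(1-x)^(m-k)))
      = real (Suc m) * (\<Sum>k\<le>m. b (Suc k) * real (m choose k) * x^k*(1-x)^(m-k) - b k * real (m choose k) * x^k*(1-x)^(m-k))"
    by (simp only: sum_distrib_left[symmetric] sum_subtractf right_diff_distrib)
  also have "(\<Sum>k\<le>m. b (Suc k) * real (m choose k) * x^k*(1-x)^(m-k) - b k * real (m choose k) * x^k*(1-x)^(m-k))
     = (\<Sum>k\<le>m. (b (Suc k) - b k) * real (m choose k) * x^k*(1-x)^(m-k))"
    by (rule sum.cong[OF refl]) (simp only: left_diff_distrib)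
  finally show ?thesis .
qed


lemma psi_step:
  assumes "k < n"
  shows "psi n (real (Suc k) / n) = psi n (real k / n) + 1 / real (n choose k)"
proof -
  have n: "n > 0" using assms by simp
  have i1: "integral {0..1} (G n (real k / n)) = -1/(real n+1) + (\<Sum>i<k. Beta (real (i+1)) (real (n-i+1)))"
    using G_int[of k n] assms by (simp add: integral_unique)
  have i2: "integral {0..1} (G n (real (Suc k) / n)) = -1/(real n+1) + (\<Sum>i<Suc k. Beta (real (i+1)) (real (n-i+1)))"
    using G_int[of "Suc k" n] assms by (simp add: integral_unique)
  have B: "Beta (real (k+1)) (real (n-k+1)) = fact k * fact (n-k) / fact (n+1)"
    using Beta_nat[of k "n-k"] assms by simp
  have c: "real (n choose k) = fact n / (fact k * fact (n-k))"
    using binomial_fact[of k n] assms by simp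
  have "(real n + 1) * Beta (real (k+1)) (real (n-k+1)) = 1 / real (n choose k)"
  proof -
    have f: "(fact (n+1)::real) = (real n + 1) * fact n" by (simp add: fact_Suc)
    have "(real n + 1) * (fact k * fact (n-k) / fact (n+1)) = fact k * fact (n-k) / (fact n :: real)"
      unfolding f by simp
    also have "\<dots> = 1 / (fact n / (fact k * fact (n-k)))" by simp
    finally show ?thesis unfolding B c .
  qed
  then show ?thesis
    unfolding psi_G i1 i2 by (simp add: algebra_simps)
qed

lemma floor_div_le:
  assumes "d > 0" shows "real_of_int \<lfloor>y * d\<rfloor> / d \<le> y"
  using assms by (simp add: divide_le_eq) 

lemma floor_div_gt:
  assumes "c > 0" shows "y - 1 / c < real_of_int \<lfloor>y * c\<rfloor> / c"
proof -
  have "y * c - 1 < real_of_int \<lfloor>y * c\<rfloor>" by linarith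
  have "y - 1 / c = (y * c - 1) / c" using assms by (simp add: field_simps)
  also have "\<dots> < real_of_int \<lfloor>y * c\<rfloor> / c" by (rule divide_strict_right_mono) fact+
  finally show ?thesis .
qed

theorem corollary2p7:
  fixes f :: "real \<Rightarrow> real" and n :: nat
  assumes "f 0 \<in> \<int>" and "f 1 \<in> \<int>" and "n \<ge> 3"
    and "\<forall>x y. 0 \<le> x \<longrightarrow> x \<le> y \<longrightarrow> y \<le> 1 \<longrightarrow> f y + psi n y \<le> f x + psi n x"
  shows "\<forall>x y. 0 \<le> x \<longrightarrow> x \<le> y \<longrightarrow> y \<le> 1 \<longrightarrow> Btilde n f y \<le> Btilde n f x"
proof -
  define b where "b k = real_of_int \<lfloor>f (real k / real n) * real (n choose k)\<rfloor> / real (n choose k)" for k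
  obtain m where nm: "n = Suc m" using assms(3) by (cases n) auto
  have Bt: "Btilde n f x = (\<Sum>k=0..n. (b k * real (n choose k)) * x^k*(1-x)^(n-k))" for x
    unfolding Btilde_def b_def by (rule sum.cong) auto
  have mono_b: "b (Suc k) \<le> b k" if k: "k < n" for k
  proof -
    have le: "real (Suc k) / n \<le> 1" using k by simp
    have le2: "real k / n \<le> real (Suc k) / n" using k by (simp add: divide_right_mono)
    have h: "f (real (Suc k) / n) + psi n (real (Suc k) / n) \<le> f (real k / n) + psi n (real k / n)"
      using assms(4) le le2 by auto
    have c: "real (n choose k) > 0" "real (n choose Suc k) > 0" using k by auto
    have "b (Suc k) \<le> f (real (Suc k) / n)" unfolding b_def by (rule floor_div_le[OF c(2)])
    also have "\<dots> \<le> f (real k / n) - 1 / real (n choose k)" using h psi_step[OF k] by simp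
    also have "\<dots> < b k" unfolding b_def by (rule floor_div_gt[OF c(1)])
    finally show ?thesis by simp
  qed
  have D: "((\<lambda>x. Btilde n f x) has_real_derivative
       real (Suc m) * (\<Sum>k\<le>m. (b (Suc k) - b k) * real (m choose k) * x^k*(1-x)^(m-k))) (at x)" for x
    unfolding Bt using bern_deriv0[of "\<lambda>k. b k * real (n choose k)" n x]
    unfolding nm bern_deriv_eq .
  show ?thesis
  proof (intro allI impI)
    fix x y :: real assume xy: "0 \<le> x" "x \<le> y" "y \<le> 1"
    show "Btilde n f y \<le> Btilde n f x"
    proof (rule DERIV_nonpos_imp_nonincreasing[OF xy(2)])
      fix z assume z: "x \<le> z" "z \<le> y"
      have "(\<Sum>k\<le>m. (b (Suc k) - b k) * real (m choose k) * z^k*(1-z)^(m-k)) \<le> 0"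
      proof (rule sum_nonpos)
        fix k assume k: "k \<in> {..m}"
        have "b (Suc k) - b k \<le> 0" using mono_b[of k] k nm by simp
        moreover have "real (m choose k) * z^k*(1-z)^(m-k) \<ge> 0" using z xy by simp
        ultimately show "(b (Suc k) - b k) * real (m choose k) * z^k*(1-z)^(m-k) \<le> 0"
          by (metis mult.assoc mult_nonpos_nonneg)
      qed
      then show "\<exists>d. ((\<lambda>x. Btilde n f x) has_real_derivative d) (at z) \<and> d \<le> 0"
        using D[of z] by (intro exI[of _ "real (Suc m) * _"]) (auto intro: mult_nonneg_nonpos)
    qed
  qed
qed

end
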